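(* Consider the linear content-access game described in the context, with parameters $\tau>0$, beliefs $\pi_G\in[0,1]$, $\pi_B=1-\pi_G$, push rates $\lambda_{ps}(G)\geq \lambda_{ps}(B)>0$ and pull rate $\lambda_{pu}>0$, and let the common threshold $\alpha$ of all other users satisfy $0\le \alpha\le \beta_{\tau,B}$. Then: (i) if $\frac{\pi_G}{\lambda_{ps}(G)} \geq \frac{\pi_B}{\lambda_{ps}(B)}$, then $\beta^*(\alpha)=0$ is a best response to $\alpha$; (ii) if $\frac{\pi_G}{\lambda_{ps}(G)} \leq \frac{\pi_B}{\lambda_{ps}(B)}$ and $\frac{\pi_G}{\lambda_{ps}(G)+\lambda_{pu}} \geq \frac{\pi_B}{\lambda_{ps}(B)+\lambda_{pu}}$, then $\beta^*(\alpha)=\alpha$ is a best response to $\alpha$; (iii) if $\frac{\pi_G}{\lambda_{ps}(G)} \leq \frac{\pi_B}{\lambda_{ps}(B)}$ and $\frac{\pi_G}{\lambda_{ps}(G)+\lambda_{pu}} < \frac{\pi_B}{\lambda_{ps}(B)+\lambda_{pu}}$, then $\beta^*(\alpha)=\beta_{\tau,B}$ is a best response to $\alpha$.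
   Context: A content has a type $\theta\in\{G,B\}$ (good/bad) and lifetime $\tau>0$. Users hold beliefs $\pi_G\in[0,1]$ that the content is good and $\pi_B=1-\pi_G$ that it is bad. Each (pull) user uses a threshold strategy: access the content once its viewcount reaches a threshold. All users other than a tagged user use a common threshold $\alpha\ge 0$; the tagged user uses $\beta\ge0$ (a single user's deviation does not affect the viewcount). Linear dynamics: for a content of type $\theta$, with push rate $\lambda_{ps}(\theta)>0$ (assumed $\lambda_{ps}(G)\ge\lambda_{ps}(B)$) and a type-independent pull rate $\lambda_{pu}>0$, let $t_\alpha(\theta)=\alpha/\lambda_{ps}(\theta)$ and define the viewcount $X(t,\theta)=\lambda_{ps}(\theta)\,t+\lambda_{pu}\,(t-t_\alpha(\theta))^+$ for $t\ge0$. For $\beta\ge0$ let $t_\beta(\theta)=\min\{t\ge 0: X(t,\theta)=\beta\}$. Let $\beta_{\tau,B}=X(\tau,B)$, i.e. the value with $t_{\beta_{\tau,B}}(B)=\tau$. The tagged user's utility is $U(\alpha,\beta)=\pi_G(\tau-t_\beta(G))-\pi_B(\tau-t_\beta(B))$ for $0\le\beta\le\beta_{\tau,B}$, and a best response $\beta^*(\alpha)$ is a maximizer of $U(\alpha,\cdot)$ over $[0,\beta_{\tau,B}]$. *)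

theory Defs
  imports Complex_Main
begin

text \<open>Linear dynamics for a content with push rate lps (= lambda_ps(theta)) and
  pull rate lpu, other users using threshold alpha.\<close>

definition t_alpha :: "real \<Rightarrow> real \<Rightarrow> real" where
  "t_alpha lps alpha = alpha / lps"

definition viewcount :: "real \<Rightarrow> real \<Rightarrow> real \<Rightarrow> real \<Rightarrow> real" where
  "viewcount lps lpu alpha t = lps * t + lpu * max 0 (t - t_alpha lps alpha)"

definition t_beta :: "real \<Rightarrow> real \<Rightarrow> real \<Rightarrow> real \<Rightarrow> real" where
  "t_beta lps lpu alpha beta = (LEAST t. 0 \<le> t \<and> viewcount lps lpu alpha t = beta)"

definition beta_tauB :: "real \<Rightarrow> real \<Rightarrow> real \<Rightarrow> real \<Rightarrow> real" where
  "beta_tauB lpsB lpu alpha tau = viewcount lpsB lpu alpha tau"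

definition utility :: "real \<Rightarrow> real \<Rightarrow> real \<Rightarrow> real \<Rightarrow> real \<Rightarrow> real \<Rightarrow> real \<Rightarrow> real" where
  "utility piG lpsG lpsB lpu tau alpha beta =
     piG * (tau - t_beta lpsG lpu alpha beta) - (1 - piG) * (tau - t_beta lpsB lpu alpha beta)"

definition best_response :: "real \<Rightarrow> real \<Rightarrow> real \<Rightarrow> real \<Rightarrow> real \<Rightarrow> real \<Rightarrow> real \<Rightarrow> bool" where
  "best_response piG lpsG lpsB lpu tau alpha beta \<longleftrightarrow>
     beta \<in> {0 .. beta_tauB lpsB lpu alpha tau} \<and>
     (\<forall>b \<in> {0 .. beta_tauB lpsB lpu alpha tau}.
        utility piG lpsG lpsB lpu tau alpha b \<le> utility piG lpsG lpsB lpu tau alpha beta)"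

end

theory Submission
  imports Defs
begin

lemma tb:
  assumes "lps > 0" "lpu > 0" "alpha \<ge> 0" "beta \<ge> 0"
  shows "t_beta lps lpu alpha beta = min beta alpha / lps + max 0 (beta - alpha) / (lps + lpu)"
proof -
  let ?T = "min beta alpha / lps + max 0 (beta - alpha) / (lps + lpu)"
  have vT: "viewcount lps lpu alpha ?T = beta"
  proof (cases "beta \<le> alpha")
    case True thus ?thesis using assms
      by (simp add: viewcount_def t_alpha_def divide_right_mono)
  next
    case False
    have "?T - alpha/lps = (beta - alpha)/(lps+lpu)" using False by simp
    moreover have "(beta - alpha)/(lps+lpu) \<ge> 0" using False assms by simp
    ultimately have "max 0 (?T - alpha/lps) = (beta - alpha)/(lps+lpu)" by simp
    hence "viewcount lps lpu alpha ?T = lps * ?T + lpu * ((beta - alpha)/(lps+lpu))"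
      by (simp add: viewcount_def t_alpha_def)
    also have "\<dots> = beta"
    proof -
      have e: "?T = alpha/lps + (beta-alpha)/(lps+lpu)" using False by simp
      have "lps + lpu > 0" using assms by simp
      hence x: "(lps+lpu) * ((beta-alpha)/(lps+lpu)) = beta - alpha" by simp
      have "lps * (alpha/lps + (beta-alpha)/(lps+lpu)) + lpu * ((beta - alpha)/(lps+lpu))
          = alpha + (lps+lpu) * ((beta-alpha)/(lps+lpu))" using assms by (simp add: distrib_left distrib_right add_divide_distrib)
      thus ?thesis unfolding e x by simp
    qed
    finally show ?thesis .
  qed
  have mono: "viewcount lps lpu alpha s < viewcount lps lpu alpha t" if "s < t" for s t
  proof -
    have "max 0 (s - alpha/lps) \<le> max 0 (t - alpha/lps)" using that by simp
    hence "lpu * max 0 (s - alpha/lps) \<le> lpu * max 0 (t - alpha/lps)" using assms by simp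
    moreover have "lps * s < lps * t" using that assms by simp
    ultimately show ?thesis by (simp add: viewcount_def t_alpha_def)
  qed
  have T0: "?T \<ge> 0" using assms by simp
  show ?thesis unfolding t_beta_def
  proof (rule Least_equality)
    show "0 \<le> ?T \<and> viewcount lps lpu alpha ?T = beta" using T0 vT by simp
  next
    fix y assume "0 \<le> y \<and> viewcount lps lpu alpha y = beta"
    thus "?T \<le> y" using mono[of y ?T] vT by force
  qed
qed

lemma lin:
  fixes c s1 s2 a B b :: real
  assumes "0 \<le> a" "a \<le> B" "0 \<le> b" "b \<le> B"
  shows "(s1 \<le> 0 \<and> s2 \<le> 0 \<longrightarrow> c + min b a * s1 + max 0 (b - a) * s2 \<le> c + min 0 a * s1 + max 0 (0 - a) * s2)
       \<and> (s1 \<ge> 0 \<and> s2 \<le> 0 \<longrightarrow> c + min b a * s1 + max 0 (b - a) * s2 \<le> c + min a a * s1 + max 0 (a - a) * s2)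
       \<and> (s1 \<ge> 0 \<and> s2 \<ge> 0 \<longrightarrow> c + min b a * s1 + max 0 (b - a) * s2 \<le> c + min B a * s1 + max 0 (B - a) * s2)"
proof -
  have "min b a * s1 \<le> 0" if "s1 \<le> 0" using that assms by (simp add: mult_nonneg_nonpos)
  moreover have "max 0 (b - a) * s2 \<le> 0" if "s2 \<le> 0" using that by (simp add: mult_nonneg_nonpos)
  moreover have "min b a * s1 \<le> a * s1" if "s1 \<ge> 0" using that by (simp add: mult_right_mono)
  moreover have "max 0 (b - a) * s2 \<le> max 0 (B - a) * s2" if "s2 \<ge> 0" using that assms
    by (intro mult_right_mono) auto
  moreover have "min B a = a" using assms by simp
  ultimately show ?thesis using assms by auto
qed

theorem lemma1:
  fixes piG lpsG lpsB lpu tau alpha :: real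
  assumes "tau > 0" and "0 \<le> piG" and "piG \<le> 1"
    and "lpsB > 0" and "lpsG \<ge> lpsB" and "lpu > 0"
    and "0 \<le> alpha" and "alpha \<le> beta_tauB lpsB lpu alpha tau"
  shows "(piG / lpsG \<ge> (1 - piG) / lpsB \<longrightarrow>
            best_response piG lpsG lpsB lpu tau alpha 0)
       \<and> (piG / lpsG \<le> (1 - piG) / lpsB \<and>
          piG / (lpsG + lpu) \<ge> (1 - piG) / (lpsB + lpu) \<longrightarrow>
            best_response piG lpsG lpsB lpu tau alpha alpha)
       \<and> (piG / lpsG \<le> (1 - piG) / lpsB \<and>
          piG / (lpsG + lpu) < (1 - piG) / (lpsB + lpu) \<longrightarrow>
            best_response piG lpsG lpsB lpu tau alpha (beta_tauB lpsB lpu alpha tau))"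
proof -
  define B where "B = beta_tauB lpsB lpu alpha tau"
  define s1 where "s1 = (1 - piG) / lpsB - piG / lpsG"
  define s2 where "s2 = (1 - piG) / (lpsB + lpu) - piG / (lpsG + lpu)"
  define c where "c = tau * (piG - (1 - piG))"
  have lG: "lpsG > 0" using assms by simp
  have U: "utility piG lpsG lpsB lpu tau alpha b = c + min b alpha * s1 + max 0 (b - alpha) * s2"
    if "b \<ge> 0" for b
    unfolding utility_def tb[OF lG assms(6,7) that] tb[OF assms(4,6,7) that] c_def s1_def s2_def
    by (simp add: algebra_simps)
  have aB: "alpha \<le> B" using assms B_def by simp
  have s2i: "s2 \<le> 0" if "s1 \<le> 0"
  proof -
    have h: "piG * lpsB \<ge> (1 - piG) * lpsG" using that lG assms(4)
      by (simp add: s1_def field_simps)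
    have "(1 - piG) * lpsG \<ge> (1 - piG) * lpsB" using assms by (simp add: mult_left_mono)
    hence "(1 - piG) * lpsB \<le> piG * lpsB" using h by linarith
    hence "piG \<ge> 1 - piG" using assms(4) by simp
    hence "piG * lpu \<ge> (1 - piG) * lpu" using assms by simp
    hence "piG * (lpsB + lpu) \<ge> (1 - piG) * (lpsG + lpu)" using h by (simp add: algebra_simps)
    have "s2 = ((1-piG)*(lpsG+lpu) - piG*(lpsB+lpu))/((lpsB+lpu)*(lpsG+lpu))"
      using lG assms by (simp add: s2_def field_simps)
    also have "\<dots> \<le> 0" using \<open>piG * (lpsB + lpu) \<ge> (1 - piG) * (lpsG + lpu)\<close> lG assms
      by (intro divide_nonpos_pos) auto
    finally show ?thesis .
  qed
  have BR: "best_response piG lpsG lpsB lpu tau alpha beta"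
    if "0 \<le> beta" "beta \<le> B"
       "\<And>b. 0 \<le> b \<Longrightarrow> b \<le> B \<Longrightarrow> c + min b alpha * s1 + max 0 (b - alpha) * s2
          \<le> c + min beta alpha * s1 + max 0 (beta - alpha) * s2" for beta
    unfolding best_response_def B_def[symmetric] using that U by auto
  show ?thesis
  proof (intro conjI impI)
    assume "(1 - piG) / lpsB \<le> piG / lpsG"
    hence "s1 \<le> 0" by (simp add: s1_def)
    thus "best_response piG lpsG lpsB lpu tau alpha 0"
      using s2i aB assms(7) lin[OF assms(7) aB, of _ s1 s2 c] by (intro BR) auto
  next
    assume "piG / lpsG \<le> (1 - piG) / lpsB \<and> (1 - piG) / (lpsB + lpu) \<le> piG / (lpsG + lpu)"
    hence "s1 \<ge> 0" "s2 \<le> 0" by (auto simp add: s1_def s2_def)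
    thus "best_response piG lpsG lpsB lpu tau alpha alpha"
      using aB assms(7) lin[OF assms(7) aB, of _ s1 s2 c] by (intro BR) auto
  next
    assume "piG / lpsG \<le> (1 - piG) / lpsB \<and> piG / (lpsG + lpu) < (1 - piG) / (lpsB + lpu)"
    hence "s1 \<ge> 0" "s2 \<ge> 0" by (auto simp add: s1_def s2_def)
    thus "best_response piG lpsG lpsB lpu tau alpha (beta_tauB lpsB lpu alpha tau)"
      using aB assms(7) lin[OF assms(7) aB, of _ s1 s2 c] unfolding B_def[symmetric] by (intro BR) auto
  qed
qed

end
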